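(* Let $q$ be a prime power, $t\ge1$, $s<t$ a nonnegative integer, and $W=\{0,w_1,\dots,w_{q^s-1}\}$ an $\mathbb{F}_q$-subspace of $\mathbb{F}_{q^t}$ of dimension $s$. Let $\alpha^*\in\mathbb{F}_{q^t}$, let $\{\beta_1,\dots,\beta_t\}$ be an arbitrary $\mathbb{F}_q$-basis of $\mathbb{F}_{q^t}$, and for $i=1,\dots,t$ let \[ g_i(x)=\beta_i\prod_{j=1}^{q^s-1}\Big(x-\big(\alpha^*-w_j^{-1}\beta_i\big)\Big). \] Then $\{g_1(\alpha^* ),\dots,g_t(\alpha^* )\}$ has rank $t$ over $\mathbb{F}_q$. *)

theory Defs
  imports "HOL-Computational_Algebra.Polynomial" "HOL-Computational_Algebra.Primes"
begin

text \<open>A subfield F of a field 'a (playing the role of F_q inside F_(q^t)).\<close>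
definition is_subfield :: "'a::field set \<Rightarrow> bool" where
  "is_subfield F \<longleftrightarrow> 0 \<in> F \<and> 1 \<in> F \<and>
     (\<forall>x\<in>F. \<forall>y\<in>F. x + y \<in> F \<and> x - y \<in> F \<and> x * y \<in> F) \<and>
     (\<forall>x\<in>F. inverse x \<in> F)"

definition F_span :: "'a::field set \<Rightarrow> 'a set \<Rightarrow> 'a set" where
  "F_span F B = {(\<Sum>x\<in>B. c x * x) | c. \<forall>x\<in>B. c x \<in> F}"

definition F_indep :: "'a::field set \<Rightarrow> 'a set \<Rightarrow> bool" where
  "F_indep F B \<longleftrightarrow> finite B \<and>
     (\<forall>c. (\<forall>x\<in>B. c x \<in> F) \<longrightarrow> (\<Sum>x\<in>B. c x * x) = 0 \<longrightarrow> (\<forall>x\<in>B. c x = 0))"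

definition F_subspace :: "'a::field set \<Rightarrow> 'a set \<Rightarrow> bool" where
  "F_subspace F W \<longleftrightarrow> 0 \<in> W \<and> (\<forall>x\<in>W. \<forall>y\<in>W. x + y \<in> W) \<and> (\<forall>c\<in>F. \<forall>x\<in>W. c * x \<in> W)"

definition F_basis :: "'a::field set \<Rightarrow> 'a set \<Rightarrow> 'a set \<Rightarrow> bool" where
  "F_basis F B W \<longleftrightarrow> B \<subseteq> W \<and> F_indep F B \<and> F_span F B = W"

definition F_rank :: "'a::field set \<Rightarrow> 'a set \<Rightarrow> nat" where
  "F_rank F S = Max {card B | B. B \<subseteq> S \<and> F_indep F B}"

definition prime_power :: "nat \<Rightarrow> bool" where
  "prime_power q \<longleftrightarrow> (\<exists>p k. prime p \<and> k > 0 \<and> q = p ^ k)"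

end

theory Submission
  imports Defs "HOL-Library.FuncSet"
begin

lemma subfield_card_mult_zero:
  fixes F :: "'a::{field,finite} set"
  assumes "is_subfield F" "a \<in> F"
  shows "of_nat (card F) * a = 0"
proof -
  have cl: "\<And>x y. x \<in> F \<Longrightarrow> y \<in> F \<Longrightarrow> x + y \<in> F \<and> x - y \<in> F"
    using assms(1) unfolding is_subfield_def by blast
  have bij: "bij_betw (\<lambda>x. x + a) F F"
    unfolding bij_betw_def
  proof
    show "inj_on (\<lambda>x. x + a) F" by (auto simp: inj_on_def)
    show "(\<lambda>x. x + a) ` F = F"
    proof
      show "(\<lambda>x. x + a) ` F \<subseteq> F" using cl assms(2) by auto
      show "F \<subseteq> (\<lambda>x. x + a) ` F"
      proof
        fix y assume "y \<in> F"
        then have "y - a \<in> F" using cl assms(2) by auto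
        moreover have "y = (y - a) + a" by simp
        ultimately show "y \<in> (\<lambda>x. x + a) ` F" by blast
      qed
    qed
  qed
  have "sum (\<lambda>x. x + a) F = sum (\<lambda>x. x) F"
    using sum.reindex_bij_betw[OF bij, of "\<lambda>x. x"] by simp
  then show ?thesis by (simp add: sum.distrib)
qed

lemma subfield_pow_card:
  fixes F :: "'a::{field,finite} set"
  assumes "is_subfield F" "a \<in> F"
  shows "a ^ card F = a"
proof -
  have cl: "\<And>x y. x \<in> F \<Longrightarrow> y \<in> F \<Longrightarrow> x * y \<in> F"
    and inv: "\<And>x. x \<in> F \<Longrightarrow> inverse x \<in> F" and z: "0 \<in> F"
    using assms(1) unfolding is_subfield_def by blast+
  have fin: "finite F" by simp
  have cpos: "card F > 0" using z fin card_gt_0_iff by blast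
  show ?thesis
  proof (cases "a = 0")
    case True then show ?thesis using cpos by simp
  next
    case False
    have bij: "bij_betw (\<lambda>x. a * x) (F - {0}) (F - {0})"
      unfolding bij_betw_def
    proof
      show "inj_on (\<lambda>x. a * x) (F - {0})" using False by (auto simp: inj_on_def)
      show "(\<lambda>x. a * x) ` (F - {0}) = F - {0}"
      proof
        show "(\<lambda>x. a * x) ` (F - {0}) \<subseteq> F - {0}" using cl assms(2) False by auto
        show "F - {0} \<subseteq> (\<lambda>x. a * x) ` (F - {0})"
        proof
          fix y assume y: "y \<in> F - {0}"
          then have "inverse a * y \<in> F - {0}" using cl inv assms(2) False by auto
          moreover have "y = a * (inverse a * y)" using False by simp
          ultimately show "y \<in> (\<lambda>x. a * x) ` (F - {0})" by blast
        qed
      qed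
    qed
    have "prod (\<lambda>x. a * x) (F - {0}) = prod (\<lambda>x. x) (F - {0})"
      using prod.reindex_bij_betw[OF bij, of "\<lambda>x. x"] by simp
    then have e: "a ^ card (F - {0}) * prod (\<lambda>x. x) (F - {0}) = prod (\<lambda>x. x) (F - {0})"
      by (simp add: prod.distrib)
    have "prod (\<lambda>x. x) (F - {0}) \<noteq> 0" by simp
    then have "a ^ card (F - {0}) = 1" using e by simp
    moreover have "card (F - {0}) = card F - 1" using z by simp
    ultimately have "a ^ (card F - 1) = 1" by simp
    then have "a * a ^ (card F - 1) = a" by simp
    then show ?thesis using cpos by (metis Suc_diff_1 power_Suc)
  qed
qed

lemma subfield_pow_card_pow:
  fixes F :: "'a::{field,finite} set"
  assumes "is_subfield F" "a \<in> F"
  shows "a ^ (card F ^ m) = a"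
proof (induction m)
  case 0 then show ?case by simp
next
  case (Suc m)
  have "a ^ (card F ^ Suc m) = (a ^ (card F ^ m)) ^ card F"
    by (simp add: power_mult[symmetric] mult.commute)
  then show ?case using Suc subfield_pow_card[OF assms] by simp
qed

lemma card_subspace:
  fixes F W B :: "'a::{field,finite} set"
  assumes "F_basis F B W" "is_subfield F"
  shows "card W = card F ^ card B"
proof -
  have sub: "B \<subseteq> W" and ind: "F_indep F B" and sp: "F_span F B = W"
    using assms unfolding F_basis_def by auto
  have finB: "finite B" by simp
  define h where "h c = (\<Sum>x\<in>B. c x * x)" for c :: "'a \<Rightarrow> 'a"
  have bij: "bij_betw h (PiE B (\<lambda>_. F)) W"
    unfolding bij_betw_def
  proof
    show "inj_on h (PiE B (\<lambda>_. F))"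
    proof (rule inj_onI)
      fix c d assume c: "c \<in> PiE B (\<lambda>_. F)" and d: "d \<in> PiE B (\<lambda>_. F)" and e: "h c = h d"
      have "(\<Sum>x\<in>B. (c x - d x) * x) = h c - h d"
        unfolding h_def by (simp add: sum_subtractf left_diff_distrib)
      also have "\<dots> = 0" using e by simp
      finally have z: "(\<Sum>x\<in>B. (c x - d x) * x) = 0" .
      have inF: "\<forall>x\<in>B. c x - d x \<in> F"
        using c d assms(2) unfolding is_subfield_def by auto
      have "\<forall>e. (\<forall>x\<in>B. e x \<in> F) \<longrightarrow> (\<Sum>x\<in>B. e x * x) = 0 \<longrightarrow> (\<forall>x\<in>B. e x = 0)"
        using ind unfolding F_indep_def by blast
      from spec[OF this, where x="\<lambda>x. c x - d x"] have "\<forall>x\<in>B. c x - d x = 0"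
        using inF z by blast
      then show "c = d" using c d by (auto intro: PiE_ext)
    qed
    show "h ` PiE B (\<lambda>_. F) = W"
    proof
      show "h ` PiE B (\<lambda>_. F) \<subseteq> W"
        using sp unfolding F_span_def h_def by auto
      show "W \<subseteq> h ` PiE B (\<lambda>_. F)"
      proof
        fix y assume "y \<in> W"
        then obtain c where c: "\<forall>x\<in>B. c x \<in> F" and y: "y = (\<Sum>x\<in>B. c x * x)"
          using sp unfolding F_span_def by auto
        have "restrict c B \<in> PiE B (\<lambda>_. F)" using c by auto
        moreover have "h (restrict c B) = y" unfolding h_def y by (rule sum.cong) auto
        ultimately show "y \<in> h ` PiE B (\<lambda>_. F)" by blast
      qed
    qed
  qed
  have "card W = card (PiE B (\<lambda>_. F))" using bij_betw_same_card[OF bij] by simp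
  also have "\<dots> = card F ^ card B" using card_PiE[OF finB, of "\<lambda>_. F"] by simp
  finally show ?thesis .
qed

theorem lemma4:
  fixes F W :: "'a::{field,finite} set"
    and q t s :: nat
    and alpha :: 'a
    and beta :: "nat \<Rightarrow> 'a"
    and g :: "nat \<Rightarrow> 'a poly"
  assumes "prime_power q"
    and "is_subfield F" and "card F = q"
    and "card (UNIV :: 'a set) = q ^ t"
    and "t \<ge> 1" and "s < t"
    and "F_subspace F W" and "\<exists>B. F_basis F B W \<and> card B = s"
    and "inj_on beta {1..t}" and "F_basis F (beta ` {1..t}) UNIV"
    and "\<And>i. i \<in> {1..t} \<Longrightarrow>
           g i = smult (beta i) (\<Prod>w\<in>W - {0}. [:- (alpha - inverse w * beta i), 1:])"
  shows "F_rank F ((\<lambda>i. poly (g i) alpha) ` {1..t}) = t"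
proof -
  obtain p k where pk: "prime p" "k > 0" "q = p ^ k"
    using assms(1) unfolding prime_power_def by blast
  have oneF: "1 \<in> F" using assms(2) unfolding is_subfield_def by blast
  have "of_nat q * (1::'a) = 0"
    using subfield_card_mult_zero[OF assms(2) oneF] assms(3) by simp
  then have "(of_nat p :: 'a) ^ k = 0" using pk by simp
  then have "(of_nat p :: 'a) = 0" by simp
  then have "CHAR('a) dvd p" using of_nat_eq_0_iff_char_dvd by blast
  moreover from pk(1) have "\<forall>m. m dvd p \<longrightarrow> m = 1 \<or> m = p" by (simp add: prime_nat_iff)
  ultimately have "CHAR('a) = 1 \<or> CHAR('a) = p" by blast
  then have charp: "CHAR('a) = p" by simp
  obtain B0 where B0: "F_basis F B0 W" "card B0 = s" using assms(8) by blast
  define N where "N = q ^ s"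
  have cardW: "card W = N" using card_subspace[OF B0(1) assms(2)] B0(2) assms(3) N_def by simp
  have NCH: "N = CHAR('a) ^ (k * s)" using N_def pk charp by (simp add: power_mult)
  have Npos: "N > 0" using N_def pk prime_gt_0_nat by simp
  have frob: "\<And>x y :: 'a. (x + y) ^ N = x ^ N + y ^ N"
    using freshmans_dream'[OF _ NCH] pk(1) charp by simp
  have frobsum: "\<And>(f :: 'a \<Rightarrow> 'a) A. sum f A ^ N = sum (\<lambda>i. f i ^ N) A"
    using freshmans_dream_sum'[OF _ NCH] pk(1) charp by simp
  have Ffix: "\<And>a. a \<in> F \<Longrightarrow> a ^ N = a"
    using subfield_pow_card_pow[OF assms(2)] assms(3) N_def by simp
  have powinj: "\<And>x y :: 'a. x ^ N = y ^ N \<Longrightarrow> x = y"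
  proof -
    fix x y :: 'a assume e: "x ^ N = y ^ N"
    have "((x - y) + y) ^ N = (x - y) ^ N + y ^ N" by (rule frob)
    then have "(x - y) ^ N = 0" using e by simp
    then show "x = y" by simp
  qed
  have W0: "0 \<in> W" using assms(7) unfolding F_subspace_def by blast
  define C where "C = (\<Prod>w\<in>W - {0}. inverse w)"
  have Cnz: "C \<noteq> 0" unfolding C_def by simp
  define \<phi> where "\<phi> x = C * x ^ N" for x :: 'a
  have cW0: "card (W - {0}) = N - 1" using cardW W0 by simp
  have gval: "poly (g i) alpha = \<phi> (beta i)" if i: "i \<in> {1..t}" for i
  proof -
    have "poly (g i) alpha = beta i * (\<Prod>w\<in>W - {0}. inverse w * beta i)"
      using assms(11)[OF i] by (simp add: poly_prod)
    also have "\<dots> = beta i * (C * beta i ^ (N - 1))"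
      unfolding C_def by (simp add: prod.distrib cW0)
    also have "\<dots> = C * (beta i * beta i ^ (N - 1))" by (simp add: algebra_simps)
    also have "beta i * beta i ^ (N - 1) = beta i ^ N"
      using Npos by (metis Suc_diff_1 power_Suc)
    finally show ?thesis unfolding \<phi>_def .
  qed
  define B where "B = beta ` {1..t}"
  define S where "S = (\<lambda>i. poly (g i) alpha) ` {1..t}"
  have SB: "S = \<phi> ` B" unfolding S_def B_def image_image using gval by (auto simp: image_iff)
  have phinj: "inj \<phi>" unfolding inj_def \<phi>_def using Cnz powinj by simp
  have cardB: "card B = t" unfolding B_def using card_image[OF assms(9)] by simp
  have cardS: "card S = t" unfolding SB using card_image[OF inj_on_subset[OF phinj]] cardB by simp
  have indB: "F_indep F B" using assms(10) unfolding F_basis_def B_def by blast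
  have indS: "F_indep F S"
    unfolding F_indep_def
  proof (intro conjI allI impI)
    show "finite S" by simp
    fix c assume cF: "\<forall>x\<in>S. c x \<in> F" and z: "(\<Sum>x\<in>S. c x * x) = 0"
    have "(\<Sum>x\<in>S. c x * x) = (\<Sum>b\<in>B. c (\<phi> b) * \<phi> b)"
      unfolding SB using sum.reindex[OF inj_on_subset[OF phinj subset_UNIV], of "\<lambda>x. c x * x" B] by (simp add: comp_def)
    also have "\<dots> = (\<Sum>b\<in>B. C * (c (\<phi> b) * b) ^ N)"
    proof (rule sum.cong)
      fix b assume "b \<in> B"
      then have "c (\<phi> b) \<in> F" using cF SB by auto
      then have "c (\<phi> b) ^ N = c (\<phi> b)" by (rule Ffix)
      then show "c (\<phi> b) * \<phi> b = C * (c (\<phi> b) * b) ^ N"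
        unfolding \<phi>_def by (simp add: power_mult_distrib)
    qed simp
    also have "\<dots> = C * (\<Sum>b\<in>B. c (\<phi> b) * b) ^ N"
      by (simp add: frobsum sum_distrib_left)
    finally have "(\<Sum>b\<in>B. c (\<phi> b) * b) ^ N = 0" using z Cnz by simp
    then have z2: "(\<Sum>b\<in>B. c (\<phi> b) * b) = 0" by simp
    have "\<forall>b\<in>B. c (\<phi> b) \<in> F" using cF SB by auto
    moreover have "\<forall>d. (\<forall>x\<in>B. d x \<in> F) \<longrightarrow> (\<Sum>x\<in>B. d x * x) = 0 \<longrightarrow> (\<forall>x\<in>B. d x = 0)"
      using indB unfolding F_indep_def by blast
    ultimately have "\<forall>b\<in>B. c (\<phi> b) = 0"
      using z2 spec[where x="\<lambda>b. c (\<phi> b)"] by blast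
    then show "\<forall>x\<in>S. c x = 0" unfolding SB by auto
  qed
  have "Max {card B | B. B \<subseteq> S \<and> F_indep F B} = t"
  proof (rule Max_eqI)
    have "{card B | B. B \<subseteq> S \<and> F_indep F B} \<subseteq> {..t}"
      using card_mono[of S] cardS by fastforce
    then show "finite {card B | B. B \<subseteq> S \<and> F_indep F B}" using finite_subset by blast
    show "\<And>y. y \<in> {card B | B. B \<subseteq> S \<and> F_indep F B} \<Longrightarrow> y \<le> t"
      using card_mono[of S] cardS by fastforce
    show "t \<in> {card B | B. B \<subseteq> S \<and> F_indep F B}" using indS cardS by blast
  qed
  then show ?thesis unfolding F_rank_def S_def .
qed

end
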